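(* Let $N\in\mathbb{N}$. Let $$\mathcal{B}'(N)=\{(q_1',q_2')\in\mathbb{Z}^2 \mid q_1'+q_2' \text{ is even and } 2q_1'^2+2q_2'^2-2q_1'-q_2'=N\},$$ let $\mathcal{U}(8N+5)=\{(x,y)\in\mathbb{Z}^2\mid x^2+y^2=8N+5\}$, and let $\varphi:\mathcal{B}'(N)\to\mathcal{U}(8N+5)$ be the (well-defined) map $\varphi(q_1',q_2')=(4q_1'-2,\,4q_2'-1)$. Let the dihedral group $D_8=\langle r,s\mid r^4=s^2=(rs)^2=1\rangle$ act on $\mathcal{U}(8N+5)$ by $r(x,y)=(-y,x)$ and $s(x,y)=(y,x)$. Then: (1) the action of $D_8$ on $\mathcal{U}(8N+5)$ is free; (2) the image $\varphi(\mathcal{B}'(N))$ is a complete set of representatives of the $D_8$-orbits of $\mathcal{U}(8N+5)$.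
   Context: The set $\mathcal{B}'(N)$ is the image, under the isometry $u$ of $\mathbb{R}^2$ with matrix $\frac{1}{\sqrt2}\begin{pmatrix}1&1\\1&-1\end{pmatrix}$, of the set of elements of the lattice $M=\sqrt2\mathbb{Z}\varepsilon_1\oplus\sqrt2\mathbb{Z}\varepsilon_2$ of type $C_2^{(1)}$ with $\Lambda_0$-atomic length $N$ (equivalently, affine Grassmannian elements of type $C_2^{(1)}$, in bijection with self-conjugate $4$-cores of size $N$); the defining quadratic expression is that atomic length written in the coordinates $(q_1',q_2')$. *)

theory Defs
  imports Main
begin

definition Bp :: "nat \<Rightarrow> (int \<times> int) set" where
  "Bp N = {(q1, q2). even (q1 + q2) \<and> 2*q1^2 + 2*q2^2 - 2*q1 - q2 = int N}"

definition U :: "int \<Rightarrow> (int \<times> int) set" where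
  "U m = {(x, y). x^2 + y^2 = m}"

definition phi :: "int \<times> int \<Rightarrow> int \<times> int" where
  "phi = (\<lambda>(q1, q2). (4*q1 - 2, 4*q2 - 1))"

definition rD :: "int \<times> int \<Rightarrow> int \<times> int" where
  "rD = (\<lambda>(x, y). (-y, x))"

definition sD :: "int \<times> int \<Rightarrow> int \<times> int" where
  "sD = (\<lambda>(x, y). (y, x))"

definition D8 :: "(int \<times> int \<Rightarrow> int \<times> int) set" where
  "D8 = {(rD ^^ k) \<circ> (sD ^^ j) | k j. k < (4::nat) \<and> j < (2::nat)}"

definition orbitD8 :: "int \<times> int \<Rightarrow> (int \<times> int) set" where
  "orbitD8 p = {g p | g. g \<in> D8}"

end

theory Submission
  imports Defs
begin

definition good :: "int \<times> int \<Rightarrow> bool" where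
  "good q = ((fst q mod 8 = 2 \<and> snd q mod 8 = 3) \<or> (fst q mod 8 = 6 \<and> snd q mod 8 = 7))"

lemma D8_eq: "D8 = {(\<lambda>(x,y). (x,y)), (\<lambda>(x,y). (-y,x)), (\<lambda>(x,y). (-x,-y)), (\<lambda>(x,y). (y,-x)),
  (\<lambda>(x,y). (y,x)), (\<lambda>(x,y). (-x,y)), (\<lambda>(x,y). (-y,-x)), (\<lambda>(x,y). (x,-y))}"
proof -
  have A: "D8 = (\<lambda>(k,j). (rD ^^ k) \<circ> (sD ^^ j)) ` ({..<4::nat} \<times> {..<2::nat})"
    unfolding D8_def image_def by (auto simp: lessThan_def)
  have B: "({..<4} \<times> {..<2}) = ({(0,0), (1,0), (2,0), (3,0), (0,1), (1,1), (2,1), (3,1)} :: (nat \<times> nat) set)"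
    by (auto simp: numeral_eq_Suc lessThan_Suc)
  have r0: "(\<lambda>(k,j). (rD ^^ k) \<circ> (sD ^^ j)) (0::nat,0::nat) = (\<lambda>(x,y). (x,y))"
    by (simp add: fun_eq_iff rD_def sD_def numeral_eq_Suc)
  have r1: "(\<lambda>(k,j). (rD ^^ k) \<circ> (sD ^^ j)) (1::nat,0::nat) = (\<lambda>(x,y). (-y,x))"
    by (simp add: fun_eq_iff rD_def sD_def numeral_eq_Suc)
  have r2: "(\<lambda>(k,j). (rD ^^ k) \<circ> (sD ^^ j)) (2::nat,0::nat) = (\<lambda>(x,y). (-x,-y))"
    by (simp add: fun_eq_iff rD_def sD_def numeral_eq_Suc)
  have r3: "(\<lambda>(k,j). (rD ^^ k) \<circ> (sD ^^ j)) (3::nat,0::nat) = (\<lambda>(x,y). (y,-x))"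
    by (simp add: fun_eq_iff rD_def sD_def numeral_eq_Suc)
  have r4: "(\<lambda>(k,j). (rD ^^ k) \<circ> (sD ^^ j)) (0::nat,1::nat) = (\<lambda>(x,y). (y,x))"
    by (simp add: fun_eq_iff rD_def sD_def numeral_eq_Suc)
  have r5: "(\<lambda>(k,j). (rD ^^ k) \<circ> (sD ^^ j)) (1::nat,1::nat) = (\<lambda>(x,y). (-x,y))"
    by (simp add: fun_eq_iff rD_def sD_def numeral_eq_Suc)
  have r6: "(\<lambda>(k,j). (rD ^^ k) \<circ> (sD ^^ j)) (2::nat,1::nat) = (\<lambda>(x,y). (-y,-x))"
    by (simp add: fun_eq_iff rD_def sD_def numeral_eq_Suc)
  have r7: "(\<lambda>(k,j). (rD ^^ k) \<circ> (sD ^^ j)) (3::nat,1::nat) = (\<lambda>(x,y). (x,-y))"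
    by (simp add: fun_eq_iff rD_def sD_def numeral_eq_Suc)
  show ?thesis unfolding A B image_insert image_empty r0 r1 r2 r3 r4 r5 r6 r7 ..
qed

lemma orbit_eq: "orbitD8 (x,y) = {(x,y), (-y,x), (-x,-y), (y,-x), (y,x), (-x,y), (-y,-x), (x,-y)}"
proof -
  have "orbitD8 p = (\<lambda>g. g p) ` D8" for p unfolding orbitD8_def by auto
  then show ?thesis unfolding D8_eq by simp
qed

lemma sq_mod8: "(x::int)^2 mod 8 = (x mod 8)^2 mod 8"
  by (metis power_mod)

lemma sqmod:
  assumes "(x::int) mod 4 \<noteq> 2"
  shows "x^2 mod 8 = 0 \<or> x^2 mod 8 = 1"
proof (cases "odd x")
  case True
  then obtain k where k: "x = 2*k+1" by (metis oddE)
  have "even (k*(k+1))" by simp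
  then obtain m where m: "k*(k+1) = 2*m" by (metis evenE)
  have "x^2 = 4*(k*(k+1)) + 1" unfolding k by (simp add: power2_eq_square algebra_simps)
  also have "\<dots> = 8*m + 1" using m by simp
  finally show ?thesis by simp
next
  case False
  then have "x mod 4 = 0" using assms by presburger
  then obtain k where k: "x = 4*k" by (metis dvd_def mod_eq_0_iff_dvd)
  have "x^2 = 8*(2*k^2)" unfolding k by (simp add: power2_eq_square algebra_simps)
  then show ?thesis by simp
qed

lemma res5:
  assumes "(x::int)^2 + y^2 = 8 * int N + 5"
  shows "x mod 4 = 2 \<or> y mod 4 = 2"
proof (rule ccontr)
  assume "\<not> ?thesis"
  then have "x^2 mod 8 = 0 \<or> x^2 mod 8 = 1" "y^2 mod 8 = 0 \<or> y^2 mod 8 = 1"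
    using sqmod by auto
  moreover have "(x^2 + y^2) mod 8 = 5" using assms by simp
  then have "(x^2 mod 8 + y^2 mod 8) mod 8 = 5" by (metis mod_add_eq)
  ultimately show False by auto
qed

lemma a1: "even ((q1::int)+q2) \<Longrightarrow> ((4*q1-2) mod 8 = 2 \<and> (4*q2-1) mod 8 = 3) \<or> ((4*q1-2) mod 8 = 6 \<and> (4*q2-1) mod 8 = 7)"
  by presburger
lemma a2: "((x::int) mod 8 = 2 \<and> (y::int) mod 8 = 3) \<or> (x mod 8 = 6 \<and> y mod 8 = 7) \<Longrightarrow> x = 4*((x+2) div 4) - 2"
  by presburger
lemma a2': "((x::int) mod 8 = 2 \<and> (y::int) mod 8 = 3) \<or> (x mod 8 = 6 \<and> y mod 8 = 7) \<Longrightarrow> y = 4*((y+1) div 4) - 1"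
  by presburger
lemma a3: "((x::int) mod 8 = 2 \<and> (y::int) mod 8 = 3) \<or> (x mod 8 = 6 \<and> y mod 8 = 7) \<Longrightarrow> even ((x+2) div 4 + (y+1) div 4)"
  by presburger

lemma image_char: "q \<in> phi ` Bp N \<longleftrightarrow> q \<in> U (8 * int N + 5) \<and> good q"
proof
  assume "q \<in> phi ` Bp N"
  then obtain q1 q2 where b: "even (q1+q2)" "2*q1^2 + 2*q2^2 - 2*q1 - q2 = int N"
    and q: "q = (4*q1-2, 4*q2-1)" unfolding Bp_def phi_def by auto
  have "(4*q1-2)^2 + (4*q2-1)^2 = 8*(2*q1^2 + 2*q2^2 - 2*q1 - q2) + 5"
    by (simp add: power2_eq_square algebra_simps)
  then have "q \<in> U (8 * int N + 5)" using b q unfolding U_def by simp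
  moreover have "good q" using a1[OF b(1)] unfolding q good_def fst_conv snd_conv .
  ultimately show "q \<in> U (8 * int N + 5) \<and> good q" by simp
next
  assume a: "q \<in> U (8 * int N + 5) \<and> good q"
  obtain x y where q: "q = (x,y)" by force
  have g: "(x mod 8 = 2 \<and> y mod 8 = 3) \<or> (x mod 8 = 6 \<and> y mod 8 = 7)" using a q good_def by simp
  define q1 where "q1 = (x+2) div 4"
  define q2 where "q2 = (y+1) div 4"
  have x: "x = 4*q1 - 2" using g unfolding q1_def by (rule a2)
  have y: "y = 4*q2 - 1" using g unfolding q2_def by (rule a2')
  have ev: "even (q1+q2)" using g unfolding q1_def q2_def by (rule a3)
  have "(4*q1-2)^2 + (4*q2-1)^2 = 8*(2*q1^2 + 2*q2^2 - 2*q1 - q2) + 5"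
    by (simp add: power2_eq_square algebra_simps)
  moreover have "x^2 + y^2 = 8 * int N + 5" using a q unfolding U_def by simp
  ultimately have "2*q1^2 + 2*q2^2 - 2*q1 - q2 = int N" using x y by simp
  then have "(q1,q2) \<in> Bp N" using ev unfolding Bp_def by simp
  moreover have "q = phi (q1,q2)" using q x y unfolding phi_def by simp
  ultimately show "q \<in> phi ` Bp N" by blast
qed

lemma orbit_abs: "(a,b) \<in> orbitD8 (x,y) \<longleftrightarrow> (\<bar>a\<bar> = \<bar>x\<bar> \<and> \<bar>b\<bar> = \<bar>y\<bar>) \<or> (\<bar>a\<bar> = \<bar>y\<bar> \<and> \<bar>b\<bar> = \<bar>x\<bar>)"
  (is "?L \<longleftrightarrow> ?R")
proof
  assume ?L then show ?R unfolding orbit_eq by (elim insertE emptyE) simp_all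
next
  assume ?R
  then have "(a = x \<or> a = -x) \<and> (b = y \<or> b = -y) \<or> (a = y \<or> a = -y) \<and> (b = x \<or> b = -x)"
    by (simp add: abs_eq_iff)
  then show ?L unfolding orbit_eq by (elim disjE conjE; simp)
qed

lemma orbit_trans:
  assumes "q \<in> orbitD8 (x,y)" "q' \<in> orbitD8 (x,y)"
  shows "q' \<in> orbitD8 q"
proof -
  obtain a b where q: "q = (a,b)" by force
  obtain c d where q': "q' = (c,d)" by force
  have "(\<bar>a\<bar> = \<bar>x\<bar> \<and> \<bar>b\<bar> = \<bar>y\<bar>) \<or> (\<bar>a\<bar> = \<bar>y\<bar> \<and> \<bar>b\<bar> = \<bar>x\<bar>)"
    "(\<bar>c\<bar> = \<bar>x\<bar> \<and> \<bar>d\<bar> = \<bar>y\<bar>) \<or> (\<bar>c\<bar> = \<bar>y\<bar> \<and> \<bar>d\<bar> = \<bar>x\<bar>)"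
    using assms unfolding q q' orbit_abs by auto
  then have "(\<bar>c\<bar> = \<bar>a\<bar> \<and> \<bar>d\<bar> = \<bar>b\<bar>) \<or> (\<bar>c\<bar> = \<bar>b\<bar> \<and> \<bar>d\<bar> = \<bar>a\<bar>)"
    by (elim disjE conjE) (simp_all only: simp_thms)
  then show ?thesis unfolding q q' orbit_abs .
qed

lemma ng1: "good (a,b) \<Longrightarrow> \<not> good (-b,a)"
  unfolding good_def fst_conv snd_conv by presburger

lemma ng2: "good (a,b) \<Longrightarrow> \<not> good (-a,-b)"
  unfolding good_def fst_conv snd_conv by presburger

lemma ng3: "good (a,b) \<Longrightarrow> \<not> good (b,-a)"
  unfolding good_def fst_conv snd_conv by presburger

lemma ng4: "good (a,b) \<Longrightarrow> \<not> good (b,a)"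
  unfolding good_def fst_conv snd_conv by presburger

lemma ng5: "good (a,b) \<Longrightarrow> \<not> good (-a,b)"
  unfolding good_def fst_conv snd_conv by presburger

lemma ng6: "good (a,b) \<Longrightarrow> \<not> good (-b,-a)"
  unfolding good_def fst_conv snd_conv by presburger

lemma ng7: "good (a,b) \<Longrightarrow> \<not> good (a,-b)"
  unfolding good_def fst_conv snd_conv by presburger

lemma uniq_good1:
  assumes "q' \<in> orbitD8 (a,b)" "good (a,b)" "good q'"
  shows "q' = (a,b)"
  using assms ng1[OF assms(2)] ng2[OF assms(2)] ng3[OF assms(2)] ng4[OF assms(2)]
    ng5[OF assms(2)] ng6[OF assms(2)] ng7[OF assms(2)] unfolding orbit_eq by blast

lemma uniq_good:
  assumes "q \<in> orbitD8 (x,y)" "q' \<in> orbitD8 (x,y)" "good q" "good q'"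
  shows "q = q'"
proof -
  obtain a b where q: "q = (a,b)" by force
  have "q' \<in> orbitD8 (a,b)" using orbit_trans[OF assms(1,2)] q by simp
  from uniq_good1[OF this] assms(3,4) q show ?thesis by simp
qed

lemma good_pick:
  assumes "(a::int) mod 4 = 2" "odd (b::int)"
  shows "good (a,b) \<or> good (-a,b) \<or> good (a,-b) \<or> good (-a,-b)"
  using assms unfolding good_def fst_conv snd_conv by presburger

lemma par1: "(x::int) mod 4 = 2 \<or> y mod 4 = 2 \<Longrightarrow> odd (x+y) \<Longrightarrow> x mod 4 = 2 \<and> odd y \<or> y mod 4 = 2 \<and> odd x"
  by presburger

lemma par2: "(x::int) mod 4 = 2 \<or> y mod 4 = 2 \<Longrightarrow> odd (x+y) \<Longrightarrow> x \<noteq> 0 \<and> y \<noteq> 0 \<and> x \<noteq> y \<and> x \<noteq> -y"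
  by presburger

lemma exists_good:
  assumes "(x::int)^2 + y^2 = 8 * int N + 5"
  shows "\<exists>q\<in>orbitD8 (x,y). good q"
proof -
  have m4: "x mod 4 = 2 \<or> y mod 4 = 2" using res5[OF assms] by blast
  have "odd (x^2 + y^2)" using assms by simp
  then have od: "odd (x + y)" by simp
  have "x mod 4 = 2 \<and> odd y \<or> y mod 4 = 2 \<and> odd x" using m4 od by (rule par1)
  then show ?thesis
  proof
    assume "x mod 4 = 2 \<and> odd y"
    then have "good (x,y) \<or> good (-x,y) \<or> good (x,-y) \<or> good (-x,-y)"
      using good_pick by blast
    then show ?thesis unfolding orbit_eq by auto
  next
    assume "y mod 4 = 2 \<and> odd x"
    then have "good (y,x) \<or> good (-y,x) \<or> good (y,-x) \<or> good (-y,-x)"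
      using good_pick by blast
    then show ?thesis unfolding orbit_eq by auto
  qed
qed

lemma orbit_U:
  assumes "(x,y) \<in> U m" "q \<in> orbitD8 (x,y)"
  shows "q \<in> U m"
  using assms unfolding orbit_eq U_def by (auto simp: algebra_simps)

lemma free:
  assumes "g \<in> D8" "(x,y) \<in> U (8 * int N + 5)" "g (x,y) = (x,y)"
  shows "g = id"
proof -
  have "x^2 + y^2 = 8 * int N + 5" using assms(2) unfolding U_def by simp
  note r = res5[OF this]
  have m4: "x mod 4 = 2 \<or> y mod 4 = 2" using r by blast
  have "odd (x^2 + y^2)" using \<open>x^2 + y^2 = 8 * int N + 5\<close> by simp
  then have od: "odd (x + y)" by simp
  have "x \<noteq> 0" "y \<noteq> 0" "x \<noteq> y" "x \<noteq> -y" using par2[OF m4 od] by auto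
  note nz = this
  from assms(1) show ?thesis unfolding D8_eq
    using assms(3) nz by (elim insertE emptyE; simp add: fun_eq_iff; linarith)
qed

theorem theorem8p8:
  fixes N :: nat
  shows "phi ` Bp N \<subseteq> U (8 * int N + 5)
    \<and> (\<forall>g\<in>D8. \<forall>p\<in>U (8 * int N + 5). g p = p \<longrightarrow> g = id)
    \<and> (\<forall>p\<in>U (8 * int N + 5). \<exists>!q. q \<in> phi ` Bp N \<and> q \<in> orbitD8 p)"
proof (intro conjI ballI impI)
  show "phi ` Bp N \<subseteq> U (8 * int N + 5)" using image_char by blast
next
  fix g p assume "g \<in> D8" "p \<in> U (8 * int N + 5)" "g p = p"
  then show "g = id" using free by (cases p) blast
next
  fix p assume p: "p \<in> U (8 * int N + 5)"
  obtain x y where xy: "p = (x,y)" by force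
  have e: "x^2 + y^2 = 8 * int N + 5" using p xy unfolding U_def by simp
  obtain q where q: "q \<in> orbitD8 (x,y)" "good q" using exists_good[OF e] by blast
  have "q \<in> phi ` Bp N" using q orbit_U[OF p[unfolded xy] q(1)] image_char by blast
  then show "\<exists>!q. q \<in> phi ` Bp N \<and> q \<in> orbitD8 p"
    using q xy image_char uniq_good by (metis (no_types, lifting))
qed

end
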